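(* Let $N\ge 1$ be an integer and let $q,c,d$ be complex numbers with $q\neq 0$. Then the $N+1$ polynomials $\big(h_k(x;c)\,h_{N-k}(x;d)\big)_{k=0}^N$ form a basis of the space of polynomials in $x$ of degree at most $N$ if and only if none of the following holds: (i) $c,d\neq 0$ and $c/d\in\{q^{1-N},q^{2-N},\dots,q^{N-1}\}$; (ii) $cd\in\{q^{1-N},q^{2-N},\dots,q^{-1},1\}$; (iii) $c=d=0$.
   Context: For a complex number $a$ and integer $k\ge 0$, the Askey–Wilson monomial is the polynomial $h_k(x;a)=h_k(x;a;q)=\prod_{j=0}^{k-1}(1-axq^j+a^2q^{2j})$ (empty product $=1$). Equivalently, if $\xi+\xi^{-1}=x$, then $h_k(x;a)=(a\xi;q)_k(a\xi^{-1};q)_k$, where $(a;q)_k=\prod_{j=0}^{k-1}(1-aq^j)$. *)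

theory Defs
  imports Complex_Main "HOL-Computational_Algebra.Polynomial"
begin

definition aw_monomial :: "complex \<Rightarrow> nat \<Rightarrow> complex \<Rightarrow> complex poly" where
  "aw_monomial q k a = (\<Prod>j<k. [:1 + a^2 * q^(2*j), - a * q^j:])"

definition is_basis_deg_le :: "nat \<Rightarrow> (nat \<Rightarrow> complex poly) \<Rightarrow> bool" where
  "is_basis_deg_le N P \<longleftrightarrow>
     (\<forall>k\<le>N. degree (P k) \<le> N) \<and>
     (\<forall>p. degree p \<le> N \<longrightarrow> (\<exists>a. p = (\<Sum>k\<le>N. smult (a k) (P k)))) \<and>
     (\<forall>a. (\<Sum>k\<le>N. smult (a k) (P k)) = 0 \<longrightarrow> (\<forall>k\<le>N. a k = 0))"

end

theory Submission
  imports Defs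
begin

lemma aw_shift: "aw_monomial q (Suc k) a = [:1 + a^2, -a:] * aw_monomial q k (a*q)"
proof -
  have "aw_monomial q (Suc k) a = [:1 + a^2 * q^(2*0), - a * q^0:] *
     (\<Prod>j<k. [:1 + a^2 * q^(2*Suc j), - a * q^Suc j:])"
    unfolding aw_monomial_def by (rule prod.lessThan_Suc_shift)
  also have "(\<Prod>j<k. [:1 + a^2 * q^(2*Suc j), - a * q^Suc j:]) = aw_monomial q k (a*q)"
    unfolding aw_monomial_def
    by (intro prod.cong refl) (simp add: power_mult_distrib power_add mult_ac power2_eq_square)
  finally show ?thesis by simp
qed

lemma aw_deg: "degree (aw_monomial q k a) \<le> k"
proof (induction k arbitrary: a)
  case 0 then show ?case by (simp add: aw_monomial_def)
next
  case (Suc k)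
  have "degree (aw_monomial q (Suc k) a) \<le> degree [:1 + a^2, -a:] + degree (aw_monomial q k (a*q))"
    unfolding aw_shift by (rule degree_mult_le)
  moreover have "degree [:1 + a^2, -a:] \<le> 1" by (simp add: degree_pCons_le)
  ultimately show ?case using Suc[of "a*q"] by linarith
qed

lemma aw_zero: "aw_monomial q k 0 = 1"
  unfolding aw_monomial_def by (simp add: pCons_one)

lemma aw_root:
  assumes "j < k" "t \<noteq> 0" "a * q^j = t \<or> a * q^j = inverse t"
  shows "poly (aw_monomial q k a) (t + inverse t) = 0"
proof -
  have "poly [:1 + a^2 * q^(2*j), - a * q^j:] (t + inverse t) = 0"
  proof -
    have e: "a^2 * q^(2*j) = (a*q^j)^2" by (simp add: power_mult_distrib power_mult mult_ac)
    have "1 + s^2 - (t + inverse t) * s = 0" if "s = t \<or> s = inverse t" for s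
      using assms(2) that by (auto simp: field_simps power2_eq_square)
    then have "1 + (a*q^j)^2 - (t + inverse t) * (a * q^j) = 0" using assms(3) by blast
    then show ?thesis unfolding e by (simp add: algebra_simps)
  qed
  then show ?thesis unfolding aw_monomial_def poly_prod
    using assms(1) by (intro prod_zero) auto
qed

definition good :: "complex \<Rightarrow> nat \<Rightarrow> complex \<Rightarrow> complex \<Rightarrow> bool" where
  "good q N c d \<longleftrightarrow> \<not> ((c \<noteq> 0 \<and> d \<noteq> 0 \<and>
          (\<exists>m::int. 1 - int N \<le> m \<and> m \<le> int N - 1 \<and> c / d = q powi m))
       \<or> (\<exists>m::int. 1 - int N \<le> m \<and> m \<le> 0 \<and> c * d = q powi m)
       \<or> (c = 0 \<and> d = 0))"

lemma good_step:
  assumes q: "q \<noteq> 0" and g: "good q (Suc N) c d"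
  shows "good q N (c*q) d" "good q N c (d*q)" "(c - d) * (1 - c*d) \<noteq> 0"
proof -
  have g1: "\<And>m. c \<noteq> 0 \<Longrightarrow> d \<noteq> 0 \<Longrightarrow> 1 - int (Suc N) \<le> m \<Longrightarrow> m \<le> int (Suc N) - 1 \<Longrightarrow> c / d \<noteq> q powi m"
    using g unfolding good_def by blast
  have g2: "\<And>m. 1 - int (Suc N) \<le> m \<Longrightarrow> m \<le> 0 \<Longrightarrow> c * d \<noteq> q powi m"
    using g unfolding good_def by blast
  have g3: "\<not> (c = 0 \<and> d = 0)" using g unfolding good_def by blast
  show "good q N (c*q) d"
    unfolding good_def
  proof (intro notI, elim disjE conjE exE)
    fix m :: int assume h: "c*q \<noteq> 0" "d \<noteq> 0" "1 - int N \<le> m" "m \<le> int N - 1" "c * q / d = q powi m"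
    have "c / d = q powi (m - 1)" using h q by (simp add: power_int_diff field_simps)
    then show False using g1[of "m - 1"] h by auto
  next
    fix m :: int assume h: "1 - int N \<le> m" "m \<le> 0" "c * q * d = q powi m"
    have "c * d = q powi (m - 1)" using h q by (simp add: power_int_diff field_simps)
    then show False using g2[of "m - 1"] h by auto
  next
    assume "c * q = 0" "d = 0" then show False using g3 q by auto
  qed
  show "good q N c (d*q)"
    unfolding good_def
  proof (intro notI, elim disjE conjE exE)
    fix m :: int assume h: "c \<noteq> 0" "d * q \<noteq> 0" "1 - int N \<le> m" "m \<le> int N - 1" "c / (d * q) = q powi m"
    have "c / d = q powi (m + 1)" using h q by (simp add: power_int_add field_simps)
    then show False using g1[of "m + 1"] h by auto
  next
    fix m :: int assume h: "1 - int N \<le> m" "m \<le> 0" "c * (d * q) = q powi m"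
    have "c * d = q powi (m - 1)" using h q by (simp add: power_int_diff field_simps)
    then show False using g2[of "m - 1"] h by auto
  next
    assume "c = 0" "d * q = 0" then show False using g3 q by auto
  qed
  show "(c - d) * (1 - c*d) \<noteq> 0"
  proof
    assume "(c - d) * (1 - c*d) = 0"
    then have "c = d \<or> c * d = 1" by auto
    then show False
    proof
      assume "c = d"
      then show False using g1[of 0] g3 by (cases "c = 0") auto
    next
      assume "c * d = 1"
      then show False using g2[of 0] by auto
    qed
  qed
qed

lemma decomp:
  fixes c d :: complex
  assumes D: "(c - d) * (1 - c*d) \<noteq> 0" and p: "degree p \<le> Suc N"
  shows "\<exists>p1 p2. degree p1 \<le> N \<and> degree p2 \<le> N \<and> p = [:1 + c^2, -c:] * p1 + [:1 + d^2, -d:] * p2"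
proof -
  define D' where "D' = (c - d) * (1 - c*d)"
  obtain a0 r where pr: "p = pCons a0 r" by (cases p) auto
  have dr: "degree r \<le> N" using p unfolding pr by (cases "r = 0") auto
  define \<alpha> where "\<alpha> = - d / D'"
  define \<beta> where "\<beta> = c / D'"
  define \<gamma> where "\<gamma> = - (1 + d^2) / D'"
  define \<delta> where "\<delta> = (1 + c^2) / D'"
  have DD: "D' \<noteq> 0" using D D'_def by simp
  have s1: "\<alpha> * (1 + c^2) + \<beta> * (1 + d^2) = 1" "\<alpha> * c + \<beta> * d = 0"
    using DD unfolding \<alpha>_def \<beta>_def by (simp_all add: field_simps) (simp add: D'_def algebra_simps power2_eq_square)
  have s2: "\<gamma> * (1 + c^2) + \<delta> * (1 + d^2) = 0" "\<gamma> * c + \<delta> * d = -1"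
    using DD unfolding \<gamma>_def \<delta>_def by (simp_all add: field_simps) (simp add: D'_def algebra_simps power2_eq_square)
  have e1: "smult \<alpha> [:1 + c^2, -c:] + smult \<beta> [:1 + d^2, -d:] = 1"
    using s1 by (simp add: one_pCons algebra_simps) (metis add.commute add_eq_0_iff)
  have e2: "smult \<gamma> [:1 + c^2, -c:] + smult \<delta> [:1 + d^2, -d:] = [:0, 1:]"
    using s2 by (simp add: algebra_simps) (metis add.commute add_eq_0_iff minus_add_distrib add_diff_cancel_left' diff_minus_eq_add)
  define p1 where "p1 = [:a0 * \<alpha>:] + smult \<gamma> r"
  define p2 where "p2 = [:a0 * \<beta>:] + smult \<delta> r"
  have "[:1 + c^2, -c:] * p1 + [:1 + d^2, -d:] * p2
      = smult a0 (smult \<alpha> [:1 + c^2, -c:] + smult \<beta> [:1 + d^2, -d:])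
        + r * (smult \<gamma> [:1 + c^2, -c:] + smult \<delta> [:1 + d^2, -d:])"
    unfolding p1_def p2_def poly_eq_poly_eq_iff[symmetric] by (rule ext) (simp add: algebra_simps)
  also have "\<dots> = p" unfolding e1 e2 pr poly_eq_poly_eq_iff[symmetric] by (rule ext) (simp add: algebra_simps)
  finally have "p = [:1 + c^2, -c:] * p1 + [:1 + d^2, -d:] * p2" ..
  moreover have "degree p1 \<le> N" unfolding p1_def using dr
    by (intro degree_add_le) (auto intro: order.trans[OF degree_smult_le])
  moreover have "degree p2 \<le> N" unfolding p2_def using dr
    by (intro degree_add_le) (auto intro: order.trans[OF degree_smult_le])
  ultimately show ?thesis by blast
qed

lemma spanning:
  assumes q: "q \<noteq> 0"
  shows "good q N c d \<Longrightarrow> degree p \<le> N \<Longrightarrow>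
    \<exists>a. p = (\<Sum>k\<le>N. smult (a k) (aw_monomial q k c * aw_monomial q (N - k) d))"
proof (induction N arbitrary: c d p)
  case 0
  then have "p = [:coeff p 0:]" by (metis degree_eq_zeroE coeff_pCons_0 le_zero_eq)
  then show ?case by (intro exI[of _ "\<lambda>_. coeff p 0"]) (simp add: aw_monomial_def one_pCons)
next
  case (Suc N)
  note gs = good_step[OF q Suc.prems(1)]
  obtain p1 p2 where pp: "degree p1 \<le> N" "degree p2 \<le> N"
    "p = [:1 + c^2, -c:] * p1 + [:1 + d^2, -d:] * p2"
    using decomp[OF gs(3) Suc.prems(2)] by blast
  obtain a where a: "p1 = (\<Sum>k\<le>N. smult (a k) (aw_monomial q k (c*q) * aw_monomial q (N - k) d))"
    using Suc.IH[OF gs(1) pp(1)] by blast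
  obtain b where b: "p2 = (\<Sum>k\<le>N. smult (b k) (aw_monomial q k c * aw_monomial q (N - k) (d*q)))"
    using Suc.IH[OF gs(2) pp(2)] by blast
  define P where "P k = aw_monomial q k c * aw_monomial q (Suc N - k) d" for k
  have h1: "[:1 + c^2, -c:] * p1 = (\<Sum>k\<le>N. smult (a k) (P (Suc k)))"
    unfolding a sum_distrib_left P_def
    by (intro sum.cong refl) (simp only: aw_shift diff_Suc_Suc mult_smult_right mult.assoc)
  have h2: "[:1 + d^2, -d:] * p2 = (\<Sum>k\<le>N. smult (b k) (P k))"
    unfolding b sum_distrib_left P_def
  proof (intro sum.cong refl)
    fix k assume k: "k \<in> {..N}"
    then have "Suc N - k = Suc (N - k)" by auto
    then show "[:1 + d^2, -d:] * smult (b k) (aw_monomial q k c * aw_monomial q (N - k) (d*q)) = smult (b k) (aw_monomial q k c * aw_monomial q (Suc N - k) d)"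
      by (simp only: aw_shift mult_smult_right mult.assoc mult.left_commute)
  qed
  define e where "e k = (if k = 0 then 0 else a (k - 1)) + (if k \<le> N then b k else 0)" for k
  have "(\<Sum>k\<le>Suc N. smult (e k) (P k)) =
     (\<Sum>k\<le>Suc N. smult (if k = 0 then 0 else a (k - 1)) (P k)) +
     (\<Sum>k\<le>Suc N. smult (if k \<le> N then b k else 0) (P k))"
    unfolding e_def smult_add_left sum.distrib ..
  also have "(\<Sum>k\<le>Suc N. smult (if k = 0 then 0 else a (k - 1)) (P k)) = (\<Sum>k\<le>N. smult (a k) (P (Suc k)))"
    by (subst sum.atMost_Suc_shift) simp
  also have "(\<Sum>k\<le>Suc N. smult (if k \<le> N then b k else 0) (P k)) = (\<Sum>k\<le>N. smult (b k) (P k))"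
    by (simp add: sum.atMost_Suc)
  finally have "p = (\<Sum>k\<le>Suc N. smult (e k) (P k))" using pp(3) h1 h2 by simp
  then show ?case unfolding P_def by blast
qed

interpretation ps: vector_space "smult :: complex \<Rightarrow> complex poly \<Rightarrow> complex poly"
  by unfold_locales (simp_all add: smult_add_right smult_add_left)

lemma indep_from_span:
  fixes P :: "nat \<Rightarrow> complex poly"
  assumes deg: "\<forall>k\<le>N. degree (P k) \<le> N"
    and sp: "\<forall>p. degree p \<le> N \<longrightarrow> (\<exists>a. p = (\<Sum>k\<le>N. smult (a k) (P k)))"
    and z: "(\<Sum>k\<le>N. smult (a k) (P k)) = 0" and k: "k \<le> N"
  shows "a k = 0"
proof -
  let ?V = "{p::complex poly. degree p \<le> N}"
  let ?S = "P ` {..N}"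
  let ?M = "(\<lambda>i. monom (1::complex) i) ` {..N}"
  have Vspan: "?V \<subseteq> ps.span ?S"
  proof
    fix p assume "p \<in> ?V"
    then obtain b where "p = (\<Sum>k\<le>N. smult (b k) (P k))" using sp by auto
    moreover have "(\<Sum>k\<le>N. smult (b k) (P k)) \<in> ps.span ?S"
      by (rule ps.span_sum, rule ps.span_scale, rule ps.span_base) auto
    ultimately show "p \<in> ps.span ?S" by simp
  qed
  have injM: "inj_on (\<lambda>i. monom (1::complex) i) {..N}"
    by (auto simp: inj_on_def monom_eq_iff')
  have Mind: "ps.independent ?M"
  proof (rule ps.independent_if_scalars_zero)
    show "finite ?M" by simp
    fix f x assume s: "(\<Sum>x\<in>?M. smult (f x) x) = 0" and x: "x \<in> ?M"
    then obtain i where i: "i \<le> N" "x = monom 1 i" by auto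
    have "(\<Sum>x\<in>?M. smult (f x) x) = (\<Sum>j\<le>N. smult (f (monom 1 j)) (monom 1 j))"
      by (simp add: sum.reindex injM)
    then have "coeff (\<Sum>j\<le>N. smult (f (monom 1 j)) (monom 1 j)) i = 0" using s by simp
    then show "f x = 0" using i by (simp add: coeff_sum coeff_monom if_distrib sum.delta cong: if_cong)
  qed
  show ?thesis
  proof (rule ccontr)
    assume ak: "a k \<noteq> 0"
    let ?T = "P ` ({..N} - {k})"
    have "(\<Sum>k\<le>N. smult (a k) (P k)) = smult (a k) (P k) + (\<Sum>j\<in>{..N} - {k}. smult (a j) (P j))"
      using k by (subst sum.remove[of _ k]) auto
    then have "smult (a k) (P k) = - (\<Sum>j\<in>{..N} - {k}. smult (a j) (P j))"
      using z by (simp add: eq_neg_iff_add_eq_0)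
    then have "smult (inverse (a k)) (smult (a k) (P k)) = smult (inverse (a k)) (- (\<Sum>j\<in>{..N} - {k}. smult (a j) (P j)))"
      by simp
    then have "P k = smult (- inverse (a k)) (\<Sum>j\<in>{..N} - {k}. smult (a j) (P j))"
      using ak by simp
    moreover have "(\<Sum>j\<in>{..N} - {k}. smult (a j) (P j)) \<in> ps.span ?T"
      by (rule ps.span_sum, rule ps.span_scale, rule ps.span_base) auto
    ultimately have Pk: "P k \<in> ps.span ?T" by (metis ps.span_scale)
    have "?S \<subseteq> ps.span ?T"
    proof
      fix v assume "v \<in> ?S"
      then obtain j where j: "j \<le> N" "v = P j" by auto
      show "v \<in> ps.span ?T"
      proof (cases "j = k")
        case True then show ?thesis using Pk j by simp
      next
        case False then show ?thesis using j by (intro ps.span_base) auto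
      qed
    qed
    then have "ps.span ?S \<subseteq> ps.span ?T" by (intro ps.span_minimal) auto
    moreover have "?M \<subseteq> ?V" by (auto intro: order.trans[OF degree_monom_le])
    ultimately have "?M \<subseteq> ps.span ?T" using Vspan by blast
    then have "card ?M \<le> card ?T" using ps.independent_span_bound[OF _ Mind] by auto
    also have "\<dots> \<le> card ({..N} - {k})" by (rule card_image_le) simp
    also have "\<dots> = N" using k by simp
    finally show False using card_image[OF injM] by simp
  qed
qed

lemma common_root:
  assumes t: "t \<noteq> 0" and ij: "i + j < N" and cj: "c * q^j = t"
    and di: "d * q^i = t \<or> d * q^i = inverse t" and k: "k \<le> N"
  shows "poly (aw_monomial q k c * aw_monomial q (N - k) d) (t + inverse t) = 0"
proof (cases "j < k")
  case True
  then show ?thesis using aw_root[OF True t, of c q] cj by simp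
next
  case False
  then have "i < N - k" using ij k by linarith
  then show ?thesis using aw_root[OF _ t, of i "N - k" d q] di by simp
qed

lemma bad_root:
  fixes q c d :: complex
  assumes q: "q \<noteq> 0" and bad: "\<not> good q N c d" and nz: "\<not> (c = 0 \<and> d = 0)"
  shows "\<exists>t i j. t \<noteq> 0 \<and> i + j < N \<and> c * q^j = t \<and> (d * q^i = t \<or> d * q^i = inverse t)"
proof -
  from bad nz consider
    (i) m where "c \<noteq> 0" "d \<noteq> 0" "1 - int N \<le> m" "m \<le> int N - 1" "c / d = q powi m"
  | (ii) m where "1 - int N \<le> m" "m \<le> 0" "c * d = q powi m"
    unfolding good_def by blast
  then show ?thesis
  proof cases
    case (i m)
    show ?thesis
    proof (cases "m \<ge> 0")
      case True
      have "q powi m = q ^ nat m" using True by (metis power_int_of_nat int_nat_eq)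
      then have "d * q ^ nat m = c" using i by (simp add: field_simps)
      then show ?thesis using i True
        by (intro exI[of _ c] exI[of _ "nat m"] exI[of _ 0]) auto
    next
      case False
      have "q powi (-m) = q ^ nat (-m)" using False by (metis power_int_of_nat int_nat_eq neg_0_le_iff_le nle_le)
      then have "c * q ^ nat (-m) = d" using i q by (simp add: power_int_minus field_simps)
      then show ?thesis using i False
        by (intro exI[of _ d] exI[of _ 0] exI[of _ "nat (-m)"]) auto
    qed
  next
    case (ii m)
    have qm: "q powi m \<noteq> 0" using q by simp
    then have c0: "c \<noteq> 0" "d \<noteq> 0" using ii by auto
    have "q powi (-m) = q ^ nat (-m)" using ii by (metis power_int_of_nat int_nat_eq neg_0_le_iff_le)
    then have "d * q ^ nat (-m) = inverse c" using ii q c0 by (simp add: power_int_minus field_simps) (metis mult.assoc)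
    then show ?thesis using ii c0
      by (intro exI[of _ c] exI[of _ "nat (-m)"] exI[of _ 0]) auto
  qed
qed

theorem mainTheorem1:
  fixes N :: nat and q c d :: complex
  assumes "N \<ge> 1" and "q \<noteq> 0"
  shows "is_basis_deg_le N (\<lambda>k. aw_monomial q k c * aw_monomial q (N - k) d) \<longleftrightarrow>
    \<not> ((c \<noteq> 0 \<and> d \<noteq> 0 \<and>
          (\<exists>m::int. 1 - int N \<le> m \<and> m \<le> int N - 1 \<and> c / d = q powi m))
       \<or> (\<exists>m::int. 1 - int N \<le> m \<and> m \<le> 0 \<and> c * d = q powi m)
       \<or> (c = 0 \<and> d = 0))"
  (is "?B \<longleftrightarrow> ?G")
proof -
  have G: "?G \<longleftrightarrow> good q N c d" unfolding good_def ..
  have deg: "\<forall>k\<le>N. degree (aw_monomial q k c * aw_monomial q (N - k) d) \<le> N"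
  proof (intro allI impI)
    fix k assume "k \<le> N"
    have "degree (aw_monomial q k c * aw_monomial q (N - k) d) \<le> k + (N - k)"
      by (rule order.trans[OF degree_mult_le add_mono[OF aw_deg aw_deg]])
    then show "degree (aw_monomial q k c * aw_monomial q (N - k) d) \<le> N" using \<open>k \<le> N\<close> by simp
  qed
  show ?thesis
  proof
    assume B: ?B
    then have sp: "\<forall>p. degree p \<le> N \<longrightarrow> (\<exists>a. p = (\<Sum>k\<le>N. smult (a k) (aw_monomial q k c * aw_monomial q (N - k) d)))"
      unfolding is_basis_deg_le_def by blast
    show ?G unfolding G
    proof (rule ccontr)
      assume bad: "\<not> good q N c d"
      show False
      proof (cases "c = 0 \<and> d = 0")
        case True
        have "degree [:0, 1::complex:] \<le> N" using assms(1) by simp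
        then obtain a where "[:0, 1:] = (\<Sum>k\<le>N. smult (a k) (aw_monomial q k c * aw_monomial q (N - k) d))"
          using sp by blast
        then have "coeff [:0, 1:] 1 = coeff (\<Sum>k\<le>N. smult (a k) (1::complex poly)) 1"
          using True by (simp add: aw_zero)
        then show False by (simp add: coeff_sum)
      next
        case False
        obtain t i j where tij: "t \<noteq> 0" "i + j < N" "c * q^j = t" "d * q^i = t \<or> d * q^i = inverse t"
          using bad_root[OF assms(2) bad False] by blast
        obtain a where "1 = (\<Sum>k\<le>N. smult (a k) (aw_monomial q k c * aw_monomial q (N - k) d))"
          using sp[rule_format, of 1] by auto
        then have "poly 1 (t + inverse t) = poly (\<Sum>k\<le>N. smult (a k) (aw_monomial q k c * aw_monomial q (N - k) d)) (t + inverse t)"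
          by simp
        also have "\<dots> = 0" unfolding poly_sum
        proof (intro sum.neutral ballI)
          fix k assume "k \<in> {..N}"
          then have "poly (aw_monomial q k c * aw_monomial q (N - k) d) (t + inverse t) = 0"
            using common_root[OF tij] by simp
          then show "poly (smult (a k) (aw_monomial q k c * aw_monomial q (N - k) d)) (t + inverse t) = 0"
            by (simp only: poly_smult mult_zero_right)
        qed
        finally show False by simp
      qed
    qed
  next
    assume ?G
    then have g: "good q N c d" using G by simp
    have sp: "\<forall>p. degree p \<le> N \<longrightarrow> (\<exists>a. p = (\<Sum>k\<le>N. smult (a k) (aw_monomial q k c * aw_monomial q (N - k) d)))"
      using spanning[OF assms(2) g] by blast
    show ?B unfolding is_basis_deg_le_def
      using deg sp indep_from_span[OF deg sp] by blast
  qed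
qed

end
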